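(* Let $r\ge 1$ and suppose $(\boldsymbol\lambda,\mathbf{s})\in\mathcal{A}_e^r$ is not a Rouquier multipartition. Then $\Psi_r(\boldsymbol\lambda,\mathbf{s})\in\mathcal{A}_e$ is not an $r$-Rouquier partition.
   Context: Fix an integer $e\ge 2$. A partition is a weakly decreasing sequence $\lambda=(\lambda_1,\lambda_2,\dots)$ of non-negative integers with finite sum $|\lambda|$; $\Lambda$ denotes the set of partitions and $\Lambda^{(m)}$ the set of $m$-multipartitions, i.e. $m$-tuples $\boldsymbol\lambda=(\lambda^{(1)},\dots,\lambda^{(m)})$ of partitions. A $\beta$-set is a subset $B\subseteq\mathbb{Z}$ containing all sufficiently small integers and no sufficiently large ones. For $\lambda\in\Lambda$ and $s\in\mathbb{Z}$ set $B_s(\lambda)=\{\lambda_i-i+s : i\ge 1\}$; every $\beta$-set equals $B_s(\lambda)$ for a unique pair $(\lambda,s)$. Let $\mathcal{A}_e=\Lambda\times\mathbb{Z}$ (abacus configurations with $e$ runners) and $\mathcal{A}_e^m=\Lambda^{(m)}\times\mathbb{Z}^m$, where $(\boldsymbol\lambda,\mathbf{s})$ is identified with the $m$-tuple of $\beta$-sets $(B_{s_1}(\lambda^{(1)}),\dots,B_{s_m}(\lambda^{(m)}))$. The map $\eta$: for $(\lambda,s)\in\mathcal{A}_e$ with $B=B_s(\lambda)$ and $0\le i<e$, the set $C_i=\{(b-i)/e : b\in B,\ b\equiv i \bmod e\}$ is a $\beta$-set, so $C_i=B_{t_i}(\rho_i)$ for a unique $(\rho_i,t_i)\in\Lambda\times\mathbb{Z}$;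 set $\eta(\lambda,s)=((\rho_0,\dots,\rho_{e-1}),(t_0,\dots,t_{e-1}))$. The $e$-weight of $\lambda$ is $\mathrm{wt}(\lambda)=\sum_i|\rho_i|$. Rouquier: $(\lambda,s)\in\mathcal{A}_e$ with $\eta(\lambda,s)=(\boldsymbol\rho,\mathbf{t})$ is a Rouquier partition if $\mathrm{wt}(\lambda)\le t_{i+1}-t_i+1$ for all $0\le i<e-1$, and an $r$-Rouquier partition if $\mathrm{wt}(\lambda)\le t_{i+1}-t_i+r$ for all $0\le i<e-1$. $(\boldsymbol\lambda,\mathbf{s})\in\mathcal{A}_e^r$ is a Rouquier multipartition if $(\lambda^{(k)},s_k)$ is a Rouquier partition for every $1\le k\le r$. Uglov's map: for $1\le k\le r$ define $\psi_k:\mathbb{Z}\to\mathbb{Z}$ by $\psi_k(ae+i)=((a+1)r-k)e+i$ for $a\in\mathbb{Z}$, $0\le i<e$. For $(\boldsymbol\lambda,\mathbf{s})\in\mathcal{A}_e^r$ the set $B=\bigsqcup_{k=1}^r\psi_k(B_{s_k}(\lambda^{(k)}))$ is a $\beta$-set, and $\Psi_r(\boldsymbol\lambda,\mathbf{s})$ is the unique $(\tilde\lambda,\tilde s)\in\mathcal{A}_e$ with $B_{\tilde s}(\tilde\lambda)=B$. *)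

theory Defs
  imports Main
begin

(* A partition is represented by the list of its nonzero parts, weakly decreasing.
   Part lambda_i (i >= 1) is the (i-1)-th list entry, or 0 beyond the length. *)
definition is_partition :: "nat list \<Rightarrow> bool" where
  "is_partition lam \<longleftrightarrow> sorted_wrt (\<ge>) lam \<and> 0 \<notin> set lam"

definition part :: "nat list \<Rightarrow> nat \<Rightarrow> nat" where
  "part lam i = (if 1 \<le> i \<and> i \<le> length lam then lam ! (i - 1) else 0)"

definition size_part :: "nat list \<Rightarrow> nat" where
  "size_part lam = sum_list lam"

definition beta_set :: "nat list \<Rightarrow> int \<Rightarrow> int set" where
  "beta_set lam s = {int (part lam i) - int i + s | i. 1 \<le> i}"

definition is_beta_set :: "int set \<Rightarrow> bool" where
  "is_beta_set B \<longleftrightarrow> (\<exists>n. \<forall>b\<le>n. b \<in> B) \<and> (\<exists>n. \<forall>b\<ge>n. b \<notin> B)"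

definition config_of :: "int set \<Rightarrow> nat list \<times> int" where
  "config_of B = (THE p. is_partition (fst p) \<and> beta_set (fst p) (snd p) = B)"

definition runner :: "int \<Rightarrow> int set \<Rightarrow> int \<Rightarrow> int set" where
  "runner e B i = {(b - i) div e | b. b \<in> B \<and> b mod e = i}"

definition eta :: "int \<Rightarrow> nat list \<Rightarrow> int \<Rightarrow> nat \<Rightarrow> nat list \<times> int" where
  "eta e lam s i = config_of (runner e (beta_set lam s) (int i))"

definition weight :: "int \<Rightarrow> nat list \<Rightarrow> int \<Rightarrow> nat" where
  "weight e lam s = (\<Sum>i<nat e. size_part (fst (eta e lam s i)))"

definition r_rouquier :: "int \<Rightarrow> int \<Rightarrow> nat list \<Rightarrow> int \<Rightarrow> bool" where
  "r_rouquier e r lam s \<longleftrightarrow>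
     (\<forall>i. i + 1 < nat e \<longrightarrow>
        int (weight e lam s) \<le> snd (eta e lam s (i + 1)) - snd (eta e lam s i) + r)"

definition rouquier :: "int \<Rightarrow> nat list \<Rightarrow> int \<Rightarrow> bool" where
  "rouquier e lam s \<longleftrightarrow> r_rouquier e 1 lam s"

definition rouquier_multi :: "int \<Rightarrow> nat \<Rightarrow> (nat \<Rightarrow> nat list) \<Rightarrow> (nat \<Rightarrow> int) \<Rightarrow> bool" where
  "rouquier_multi e r lam s \<longleftrightarrow> (\<forall>k\<in>{1..r}. rouquier e (lam k) (s k))"

(* Uglov's psi_k(a e + i) = ((a+1) r - k) e + i *)
definition uglov_psi :: "int \<Rightarrow> nat \<Rightarrow> nat \<Rightarrow> int \<Rightarrow> int" where
  "uglov_psi e r k b = ((b div e + 1) * int r - int k) * e + b mod e"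

definition Uglov_Psi :: "int \<Rightarrow> nat \<Rightarrow> (nat \<Rightarrow> nat list) \<Rightarrow> (nat \<Rightarrow> int) \<Rightarrow> nat list \<times> int" where
  "Uglov_Psi e r lam s = config_of (\<Union>k\<in>{1..r}. uglov_psi e r k ` beta_set (lam k) (s k))"

end

theory Submission
  imports Defs
begin


definition win :: "int set \<Rightarrow> int \<Rightarrow> int \<Rightarrow> bool" where
  "win B L U \<longleftrightarrow> {..<L} \<subseteq> B \<and> B \<subseteq> {..<U}"

lemma beta_nil: "beta_set [] s = {..<s}"
proof -
  have "x \<in> beta_set [] s \<longleftrightarrow> x < s" for x
  proof
    assume "x \<in> beta_set [] s" then show "x < s" by (auto simp: beta_set_def part_def)
  next
    assume "x < s"
    then have "x = int (part [] (nat (s - x))) - int (nat (s-x)) + s \<and> 1 \<le> nat (s - x)"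
      by (auto simp: part_def)
    then show "x \<in> beta_set [] s" unfolding beta_set_def by blast
  qed
  then show ?thesis by auto
qed

lemma part_cons1: "part (q#l) 1 = q" by (simp add: part_def)
lemma part_cons1': "part (q#l) (Suc 0) = q" by (simp add: part_def)
lemma part_cons_Suc: "1 \<le> i \<Longrightarrow> part (q#l) (Suc i) = part l i"
  by (auto simp: part_def nth_Cons')

lemma beta_cons: "beta_set (q#l) s = insert (int q - 1 + s) (beta_set l (s - 1))"
proof -
  have "x \<in> beta_set (q#l) s \<longleftrightarrow> x \<in> insert (int q - 1 + s) (beta_set l (s - 1))" for x
  proof
    assume "x \<in> beta_set (q#l) s"
    then obtain i where i: "1 \<le> i" "x = int (part (q#l) i) - int i + s" by (auto simp: beta_set_def)
    show "x \<in> insert (int q - 1 + s) (beta_set l (s - 1))"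
    proof (cases "i = 1")
      case True then show ?thesis using i by (simp add: part_cons1 part_cons1')
    next
      case False
      then obtain j where j: "i = Suc j" "1 \<le> j" using i by (cases i) auto
      then have "x = int (part l j) - int j + (s - 1)" using i by (simp add: part_cons_Suc)
      then show ?thesis using j unfolding beta_set_def by blast
    qed
  next
    assume "x \<in> insert (int q - 1 + s) (beta_set l (s - 1))"
    then show "x \<in> beta_set (q#l) s"
    proof
      assume "x = int q - 1 + s"
      then have "x = int (part (q#l) 1) - int (1::nat) + s" by (simp add: part_cons1 part_cons1')
      then show ?thesis unfolding beta_set_def by blast
    next
      assume "x \<in> beta_set l (s - 1)"
      then obtain j where j: "1 \<le> j" "x = int (part l j) - int j + (s - 1)" by (auto simp: beta_set_def)
      then have "x = int (part (q#l) (Suc j)) - int (Suc j) + s" by (simp add: part_cons_Suc)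
      moreover have "1 \<le> Suc j" by simp
      ultimately show ?thesis unfolding beta_set_def by blast
    qed
  qed
  then show ?thesis by blast
qed

lemma is_partition_cons: "is_partition (q#l) \<longleftrightarrow> q \<noteq> 0 \<and> (\<forall>x\<in>set l. x \<le> q) \<and> is_partition l"
  by (auto simp: is_partition_def)

lemma part1_le: "is_partition (q#l) \<Longrightarrow> part l 1 \<le> q"
  by (cases l) (auto simp: part_def is_partition_cons)

lemma beta_ub: "is_partition l \<Longrightarrow> x \<in> beta_set l s \<Longrightarrow> x < int (part l 1) + s"
proof (induction l arbitrary: s x)
  case Nil then show ?case by (simp add: beta_nil part_def)
next
  case (Cons q l)
  have pl: "is_partition l" using Cons.prems(1) by (simp add: is_partition_cons)
  have le: "part l 1 \<le> q" using part1_le[OF Cons.prems(1)] .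
  have q0: "q \<noteq> 0" using Cons.prems(1) by (simp add: is_partition_cons)
  from Cons.prems(2) consider "x = int q - 1 + s" | "x \<in> beta_set l (s - 1)" by (auto simp: beta_cons)
  then show ?case
  proof cases
    case 1 then show ?thesis by (simp add: part_cons1 part_cons1')
  next
    case 2 then have "x < int (part l 1) + (s - 1)" using Cons.IH pl by blast
    then show ?thesis using le by (simp add: part_cons1 part_cons1')
  qed
qed

lemma beta_lb: "{..< s - int (length l)} \<subseteq> beta_set l s"
proof (induction l arbitrary: s)
  case Nil then show ?case by (simp add: beta_nil)
next
  case (Cons q l)
  have "{..< (s - 1) - int (length l)} \<subseteq> beta_set l (s - 1)" by (rule Cons.IH)
  moreover have "{..< s - int (length (q#l))} = {..< (s - 1) - int (length l)}" by auto
  ultimately show ?case unfolding beta_cons by (metis subset_insertI2)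
qed

lemma beta_win: "is_partition l \<Longrightarrow> win (beta_set l s) (s - int (length l)) (int (part l 1) + s)"
  using beta_lb beta_ub unfolding win_def by blast

lemma beta_max_notin: "is_partition (q#l) \<Longrightarrow> int q - 1 + s \<notin> beta_set l (s - 1)"
  using beta_ub[of l "int q - 1 + s" "s - 1"] part1_le[of q l] by (auto simp: is_partition_cons)



lemma ins_max:
  assumes p: "is_partition l" and b: "\<forall>x\<in>beta_set l s. x < b"
  shows "\<exists>l'. is_partition l' \<and> insert b (beta_set l s) = beta_set l' (s+1)"
proof (cases l)
  case Nil
  then have "s - 1 < b" using b by (simp add: beta_nil)
  show ?thesis
  proof (cases "b = s")
    case True
    then have "insert b (beta_set l s) = beta_set [] (s+1)" using Nil by (auto simp: beta_nil)
    moreover have "is_partition []" by (simp add: is_partition_def)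
    ultimately show ?thesis by metis
  next
    case False
    then have bs: "b > s" using \<open>s - 1 < b\<close> by simp
    have "beta_set [nat (b - s)] (s+1) = insert b (beta_set l s)"
      using bs Nil by (simp add: beta_cons)
    moreover have "is_partition [nat (b - s)]" using bs by (simp add: is_partition_def)
    ultimately show ?thesis by metis
  qed
next
  case (Cons p l0)
  have "int p - 1 + s \<in> beta_set l s" using Cons by (simp add: beta_cons)
  then have pb: "int p - 1 + s < b" using b by blast
  have p0: "p \<noteq> 0" using p Cons by (simp add: is_partition_cons)
  have "beta_set (nat (b - s) # l) (s+1) = insert b (beta_set l s)"
    using pb p0 by (simp add: beta_cons)
  moreover have "is_partition (nat (b - s) # l)"
    using p pb p0 Cons by (auto simp: is_partition_cons)
  ultimately show ?thesis by metis
qed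

lemma exists_aux:
  assumes "finite F" "F \<subseteq> {L..}"
  shows "\<exists>l s. is_partition l \<and> {..<L} \<union> F = beta_set l s"
  using assms
proof (induction F rule: finite_linorder_max_induct)
  case empty
  have "is_partition [] \<and> {..<L} \<union> {} = beta_set [] L" by (simp add: beta_nil is_partition_def)
  then show ?case by blast
next
  case (insert b A)
  then obtain l s where ls: "is_partition l" "{..<L} \<union> A = beta_set l s" by auto
  have "\<forall>x\<in>beta_set l s. x < b" using insert.hyps insert.prems ls(2)[symmetric] by auto
  from ins_max[OF ls(1) this] obtain l' where "is_partition l'" "insert b (beta_set l s) = beta_set l' (s+1)" by blast
  then show ?case using ls(2) by (metis Un_insert_right)
qed

lemma exists_beta:
  assumes "win B L U"
  shows "\<exists>l s. is_partition l \<and> B = beta_set l s"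
proof -
  have "finite (B \<inter> {L..})" using assms unfolding win_def
    by (meson finite_atLeastLessThan_int finite_subset inf_le1 subset_iff Int_iff atLeastLessThan_iff lessThan_iff atLeast_iff) 
  moreover have "B = {..<L} \<union> (B \<inter> {L..})" using assms unfolding win_def by auto
  ultimately show ?thesis using exists_aux[of "B \<inter> {L..}" L] by auto
qed



lemma win_fin1: "win B L U \<Longrightarrow> finite {y\<in>B. x < y}"
  unfolding win_def by (rule finite_subset[of _ "{x<..<U}"]) auto
lemma win_fin2: "win B L U \<Longrightarrow> finite {y. y \<notin> B \<and> y \<le> x}"
  unfolding win_def by (rule finite_subset[of _ "{L..x}"]) (auto simp: not_less[symmetric])

lemma CH: "is_partition l \<Longrightarrow>
  s = x + 1 + int (card {y\<in>beta_set l s. x < y}) - int (card {y. y \<notin> beta_set l s \<and> y \<le> x})"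
proof (induction l arbitrary: s)
  case Nil
  have e1: "{y\<in>beta_set [] s. x < y} = {x<..<s}" by (auto simp: beta_nil)
  have e2: "{y. y \<notin> beta_set [] s \<and> y \<le> x} = {s..x}" by (auto simp: beta_nil)
  show ?case unfolding e1 e2 by simp
next
  case (Cons q l)
  have pl: "is_partition l" using Cons.prems by (simp add: is_partition_cons)
  define m where "m = int q - 1 + s"
  define B' where "B' = beta_set l (s - 1)"
  have B: "beta_set (q#l) s = insert m B'" unfolding m_def B'_def by (simp add: beta_cons)
  have mn: "m \<notin> B'" unfolding m_def B'_def by (rule beta_max_notin[OF Cons.prems])
  have w: "win B' (s - 1 - int (length l)) (int (part l 1) + (s - 1))" unfolding B'_def by (rule beta_win[OF pl])
  have IH: "s - 1 = x + 1 + int (card {y\<in>B'. x < y}) - int (card {y. y \<notin> B' \<and> y \<le> x})"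
    unfolding B'_def by (rule Cons.IH[OF pl])
  show ?case
  proof (cases "x < m")
    case True
    have e1: "{y\<in>insert m B'. x < y} = insert m {y\<in>B'. x < y}" using True by auto
    have e2: "{y. y \<notin> insert m B' \<and> y \<le> x} = {y. y \<notin> B' \<and> y \<le> x}" using True by auto
    have "card (insert m {y\<in>B'. x < y}) = Suc (card {y\<in>B'. x < y})"
      using mn win_fin1[OF w] by simp
    then show ?thesis unfolding B e1 e2 using IH by simp
  next
    case False
    have e1: "{y\<in>insert m B'. x < y} = {y\<in>B'. x < y}" using False by auto
    have e2: "{y. y \<notin> B' \<and> y \<le> x} = insert m {y. y \<notin> insert m B' \<and> y \<le> x}" using False mn by auto
    have "card (insert m {y. y \<notin> insert m B' \<and> y \<le> x}) = Suc (card {y. y \<notin> insert m B' \<and> y \<le> x})"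
      using win_fin2[OF w, of x] by (subst card_insert_disjoint) (auto intro: finite_subset)
    then show ?thesis unfolding B e1 using IH e2 by simp
  qed
qed

lemma uniq_list: "is_partition l \<Longrightarrow> is_partition m \<Longrightarrow> beta_set l s = beta_set m s \<Longrightarrow> l = m"
proof (induction l arbitrary: m s)
  case Nil
  show ?case
  proof (cases m)
    case (Cons p m0)
    have "int p - 1 + s \<in> beta_set [] s" using Nil.prems(2,3) Cons by (simp add: beta_cons)
    moreover have "p \<noteq> 0" using Nil.prems(2) Cons by (simp add: is_partition_cons)
    ultimately show ?thesis by (simp add: beta_nil)
  qed simp
next
  case (Cons q l)
  show ?case
  proof (cases m)
    case Nil
    have "int q - 1 + s \<in> beta_set [] s" using Cons.prems(3) Nil by (metis beta_cons insertI1)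
    moreover have "q \<noteq> 0" using Cons.prems(1) by (simp add: is_partition_cons)
    ultimately show ?thesis by (simp add: beta_nil)
  next
    case Cons2: (Cons p m0)
    have pm: "is_partition (p#m0)" using Cons.prems(2) Cons2 by simp
    have a: "int q - 1 + s \<in> beta_set (p#m0) s" using Cons.prems(3) Cons2 by (metis beta_cons insertI1)
    have b: "int p - 1 + s \<in> beta_set (q#l) s" using Cons.prems(3) Cons2 by (metis beta_cons insertI1)
    have "int q - 1 + s < int p + s" using beta_ub[OF pm a] by (simp add: part_cons1')
    moreover have "int p - 1 + s < int q + s" using beta_ub[OF Cons.prems(1) b] by (simp add: part_cons1')
    ultimately have pq: "p = q" by simp
    have n1: "int q - 1 + s \<notin> beta_set l (s - 1)" by (rule beta_max_notin[OF Cons.prems(1)])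
    have n2: "int q - 1 + s \<notin> beta_set m0 (s - 1)" using beta_max_notin[OF pm] pq by simp
    have "insert (int q - 1 + s) (beta_set l (s - 1)) = insert (int q - 1 + s) (beta_set m0 (s - 1))"
      using Cons.prems(3) Cons2 pq by (simp add: beta_cons)
    then have "beta_set l (s - 1) = beta_set m0 (s - 1)" using n1 n2
      by (metis Diff_insert_absorb)
    then have "l = m0" using Cons.IH[of m0 "s - 1"] Cons.prems(1) pm by (simp add: is_partition_cons)
    then show ?thesis using Cons2 pq by simp
  qed
qed

lemma uniq: "is_partition l \<Longrightarrow> is_partition m \<Longrightarrow> beta_set l s = beta_set m t \<Longrightarrow> l = m \<and> s = t"
proof -
  assume a: "is_partition l" "is_partition m" "beta_set l s = beta_set m t"
  have "s = t" using CH[OF a(1), of s 0] CH[OF a(2), of t 0] a(3) by simp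
  then show ?thesis using uniq_list a by simp
qed

lemma config_beta: "is_partition l \<Longrightarrow> config_of (beta_set l s) = (l, s)"
  unfolding config_of_def
  by (rule the_equality) (auto dest: uniq)

lemma config_win: "win B L U \<Longrightarrow> \<exists>l s. is_partition l \<and> B = beta_set l s \<and> config_of B = (l, s)"
  using exists_beta config_beta by metis



definition Pl :: "int set \<Rightarrow> int set \<Rightarrow> nat" where
  "Pl X Y = card {(x,y). x \<in> X \<and> y \<notin> Y \<and> y \<le> x}"
definition Ps :: "int set \<Rightarrow> int set \<Rightarrow> nat" where
  "Ps X Y = card {(x,y). x \<in> X \<and> y \<notin> Y \<and> y < x}"

lemma fin_pl: assumes "win X L1 U1" "win Y L2 U2" shows "finite {(x,y). x \<in> X \<and> y \<notin> Y \<and> y \<le> x}"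
proof (rule finite_subset[of _ "{L2..<U1} \<times> {L2..<U1}"])
  show "{(x,y). x \<in> X \<and> y \<notin> Y \<and> y \<le> x} \<subseteq> {L2..<U1} \<times> {L2..<U1}"
  proof clarify
    fix x y assume a: "x \<in> X" "y \<notin> Y" "y \<le> x"
    have "x < U1" using a assms(1) unfolding win_def by auto
    moreover have "L2 \<le> y" using a assms(2) unfolding win_def by (auto simp: not_less[symmetric])
    ultimately show "x \<in> {L2..<U1} \<and> y \<in> {L2..<U1}" using a by auto
  qed
qed simp

lemma fin_ps: assumes "win X L1 U1" "win Y L2 U2" shows "finite {(x,y). x \<in> X \<and> y \<notin> Y \<and> y < x}"
proof (rule finite_subset[OF _ fin_pl[OF assms]])
  show "{(x,y). x \<in> X \<and> y \<notin> Y \<and> y < x} \<subseteq> {(x,y). x \<in> X \<and> y \<notin> Y \<and> y \<le> x}" by auto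
qed

lemma win_insert: "win X L U \<Longrightarrow> win (insert x0 X) L (max U (x0+1))"
  unfolding win_def by auto

lemma stepX:
  assumes w1: "win X' L1 U1" and w2: "win Y L2 U2" and lt: "\<forall>z\<in>X'. z < x0"
  shows "int (Pl (insert x0 X') Y) + int (Ps Y (insert x0 X')) =
     int (Pl X' Y) + int (Ps Y X') + int (card {y. y \<notin> Y \<and> y \<le> x0}) - int (card {y\<in>Y. x0 < y})"
proof -
  have x0n: "x0 \<notin> X'" using lt by auto
  have w1': "win (insert x0 X') L1 (max U1 (x0+1))" by (rule win_insert[OF w1])
  have e1: "{(x,y). x \<in> insert x0 X' \<and> y \<notin> Y \<and> y \<le> x} =
        {(x,y). x \<in> X' \<and> y \<notin> Y \<and> y \<le> x} \<union> ({x0} \<times> {y. y \<notin> Y \<and> y \<le> x0})" by auto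
  have c1: "Pl (insert x0 X') Y = Pl X' Y + card {y. y \<notin> Y \<and> y \<le> x0}"
    unfolding Pl_def e1
    by (subst card_Un_disjoint) (auto simp: x0n fin_pl[OF w1 w2] win_fin2[OF w2] card_cartesian_product)
  have e2: "{(y,x). y \<in> Y \<and> x \<notin> X' \<and> x < y} =
        {(y,x). y \<in> Y \<and> x \<notin> insert x0 X' \<and> x < y} \<union> ({y\<in>Y. x0 < y} \<times> {x0})" using x0n by auto
  have c2: "Ps Y X' = Ps Y (insert x0 X') + card {y\<in>Y. x0 < y}"
    unfolding Ps_def e2
    using fin_ps[OF w2 w1'] win_fin1[OF w2, of x0]
    by (subst card_Un_disjoint) (simp_all add: card_cartesian_product, auto)
  show ?thesis using c1 c2 by simp
qed

lemma stepY:
  assumes w1: "win X L1 U1" and w2: "win Y' L2 U2" and lt: "\<forall>z\<in>Y'. z < y0"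
  shows "int (Pl X (insert y0 Y')) + int (Ps (insert y0 Y') X) =
     int (Pl X Y') + int (Ps Y' X) - int (card {x\<in>X. y0 \<le> x}) + int (card {x. x \<notin> X \<and> x < y0})"
proof -
  have y0n: "y0 \<notin> Y'" using lt by auto
  have w2': "win (insert y0 Y') L2 (max U2 (y0+1))" by (rule win_insert[OF w2])
  have e1: "{(x,y). x \<in> X \<and> y \<notin> Y' \<and> y \<le> x} =
        {(x,y). x \<in> X \<and> y \<notin> insert y0 Y' \<and> y \<le> x} \<union> ({x\<in>X. y0 \<le> x} \<times> {y0})" using y0n by auto
  have fA: "finite {x\<in>X. y0 \<le> x}" 
  proof -
    have "{x\<in>X. y0 \<le> x} = {x\<in>X. y0 - 1 < x}" by auto
    then show ?thesis using win_fin1[OF w1, of "y0 - 1"] by simp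
  qed
  have c1: "Pl X Y' = Pl X (insert y0 Y') + card {x\<in>X. y0 \<le> x}"
    unfolding Pl_def e1
    using fin_pl[OF w1 w2'] fA
    by (subst card_Un_disjoint) (simp_all add: card_cartesian_product, auto)
  have e2: "{(y,x). y \<in> insert y0 Y' \<and> x \<notin> X \<and> x < y} =
        {(y,x). y \<in> Y' \<and> x \<notin> X \<and> x < y} \<union> ({y0} \<times> {x. x \<notin> X \<and> x < y0})" by auto
  have fB: "finite {x. x \<notin> X \<and> x < y0}" by (rule finite_subset[OF _ win_fin2[OF w1, of y0]]) auto
  have c2: "Ps (insert y0 Y') X = Ps Y' X + card {x. x \<notin> X \<and> x < y0}"
    unfolding Ps_def e2
    by (subst card_Un_disjoint) (auto simp: y0n fin_ps[OF w2 w1] fB card_cartesian_product)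
  show ?thesis using c1 c2 by simp
qed



lemma win_lt: "win {..<a} a a" by (simp add: win_def)

lemma lt_max: "is_partition (q#l) \<Longrightarrow> \<forall>z\<in>beta_set l (s-1). z < int q - 1 + s"
  using beta_ub[of l _ "s-1"] part1_le[of q l] by (force simp: is_partition_cons)

lemma CH2: "is_partition l \<Longrightarrow>
  s = y0 + int (card {x\<in>beta_set l s. y0 \<le> x}) - int (card {x. x \<notin> beta_set l s \<and> x < y0})"
proof -
  assume p: "is_partition l"
  have "{x\<in>beta_set l s. y0 \<le> x} = {x\<in>beta_set l s. y0 - 1 < x}" by auto
  moreover have "{x. x \<notin> beta_set l s \<and> x < y0} = {x. x \<notin> beta_set l s \<and> x \<le> y0 - 1}" by auto
  ultimately show ?thesis using CH[OF p, of s "y0 - 1"] by simp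
qed

lemma baseA: "2 * (int (Pl {..<b + int d} {..<b}) + int (Ps {..<b} {..<b + int d})) = int d * (int d + 1)"
proof (induction d)
  case 0
  have e1: "{(x,y). x \<in> {..<b} \<and> y \<notin> {..<b} \<and> y \<le> x} = {}" by auto
  have e2: "{(x,y). x \<in> {..<b} \<and> y \<notin> {..<b} \<and> y < x} = {}" by auto
  show ?case unfolding Pl_def Ps_def of_nat_0 add_0_right e1 e2 by simp
next
  case (Suc d)
  have i: "{..<b + int (Suc d)} = insert (b + int d) {..<b + int d}" by auto
  have "\<forall>z\<in>{..<b + int d}. z < b + int d" by auto
  note st = stepX[OF win_lt win_lt this, of b]
  have e1: "{y. y \<notin> {..<b} \<and> y \<le> b + int d} = {b..b + int d}" by auto
  have e2: "{y \<in> {..<b}. b + int d < y} = {}" by auto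
  show ?case unfolding i using st Suc.IH unfolding e1 e2 by (simp add: algebra_simps)
qed

lemma baseB: "2 * (int (Pl {..<a} {..<a + int d}) + int (Ps {..<a + int d} {..<a})) = int d * (int d - 1)"
proof (induction d)
  case 0
  have e1: "{(x,y). x \<in> {..<a} \<and> y \<notin> {..<a} \<and> y \<le> x} = {}" by auto
  have e2: "{(x,y). x \<in> {..<a} \<and> y \<notin> {..<a} \<and> y < x} = {}" by auto
  show ?case unfolding Pl_def Ps_def of_nat_0 add_0_right e1 e2 by simp
next
  case (Suc d)
  have i: "{..<a + int (Suc d)} = insert (a + int d) {..<a + int d}" by auto
  have "\<forall>z\<in>{..<a + int d}. z < a + int d" by auto
  note st = stepY[OF win_lt win_lt this, of a]
  have e1: "{x \<in> {..<a}. a + int d \<le> x} = {}" by auto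
  have e2: "{x. x \<notin> {..<a} \<and> x < a + int d} = {a..<a + int d}" by auto
  show ?case unfolding i using st Suc.IH unfolding e1 e2 by (simp add: algebra_simps)
qed

lemma base: "2 * (int (Pl {..<a} {..<b}) + int (Ps {..<b} {..<a})) = (a - b) * (a - b + 1)"
proof (cases "b \<le> a")
  case True
  then obtain d where "a = b + int d" by (metis le_add_diff_inverse zero_le_imp_eq_int le_iff_diff_le_0 diff_ge_0_iff_ge)
  then show ?thesis using baseA[of b d] by simp
next
  case False
  then obtain d where "b = a + int d" by (metis less_le_not_le le_add_diff_inverse zero_le_imp_eq_int diff_ge_0_iff_ge nle_le)
  then show ?thesis using baseB[of a d] by (simp add: algebra_simps)
qed

lemma size_cons: "size_part (q#l) = q + size_part l" by (simp add: size_part_def)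
lemma size_nil: "size_part [] = 0" by (simp add: size_part_def)

lemma pair_nil: "is_partition m \<Longrightarrow>
  2 * (int (Pl (beta_set [] a) (beta_set m b)) + int (Ps (beta_set m b) (beta_set [] a)))
   = 2 * int (size_part m) + (a - b) * (a - b + 1)"
proof (induction m arbitrary: b)
  case Nil then show ?case using base[of a b] by (simp add: beta_nil size_nil)
next
  case (Cons p m0)
  have pm: "is_partition m0" using Cons.prems by (simp add: is_partition_cons)
  define y0 where "y0 = int p - 1 + b"
  have Y: "beta_set (p#m0) b = insert y0 (beta_set m0 (b - 1))" unfolding y0_def by (simp add: beta_cons)
  note st = stepY[OF win_lt[of a] beta_win[OF pm, of "b-1"] lt_max[OF Cons.prems, of b, unfolded y0_def[symmetric]]]
  note ch = CH2[of "[]" a y0, simplified is_partition_def, simplified]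
  have IH: "2 * (int (Pl (beta_set [] a) (beta_set m0 (b-1))) + int (Ps (beta_set m0 (b-1)) (beta_set [] a)))
   = 2 * int (size_part m0) + (a - (b-1)) * (a - (b-1) + 1)" by (rule Cons.IH[OF pm])
  show ?case unfolding Y using st IH ch unfolding beta_nil y0_def size_cons
    by (simp add: algebra_simps)
qed

lemma pair: "is_partition l \<Longrightarrow> is_partition m \<Longrightarrow>
  2 * (int (Pl (beta_set l a) (beta_set m b)) + int (Ps (beta_set m b) (beta_set l a)))
   = 2 * int (size_part l) + 2 * int (size_part m) + (a - b) * (a - b + 1)"
proof (induction l arbitrary: a)
  case Nil then show ?case using pair_nil[OF Nil.prems(2)] by (simp add: size_nil)
next
  case (Cons q l0)
  have pl: "is_partition l0" using Cons.prems by (simp add: is_partition_cons)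
  define x0 where "x0 = int q - 1 + a"
  have X: "beta_set (q#l0) a = insert x0 (beta_set l0 (a - 1))" unfolding x0_def by (simp add: beta_cons)
  note st = stepX[OF beta_win[OF pl, of "a-1"] beta_win[OF Cons.prems(2), of b] lt_max[OF Cons.prems(1), of a, unfolded x0_def[symmetric]]]
  note ch = CH[OF Cons.prems(2), of b x0]
  have IH: "2 * (int (Pl (beta_set l0 (a-1)) (beta_set m b)) + int (Ps (beta_set m b) (beta_set l0 (a-1))))
   = 2 * int (size_part l0) + 2 * int (size_part m) + ((a-1) - b) * ((a-1) - b + 1)" by (rule Cons.IH[OF pl Cons.prems(2)])
  show ?case unfolding X using st IH ch unfolding x0_def size_cons
    by (simp add: algebra_simps)
qed

lemma inv_size: "is_partition l \<Longrightarrow> int (Ps (beta_set l a) (beta_set l a)) = int (size_part l)"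
proof -
  assume p: "is_partition l"
  have "{(x,y). x \<in> beta_set l a \<and> y \<notin> beta_set l a \<and> y \<le> x} = {(x,y). x \<in> beta_set l a \<and> y \<notin> beta_set l a \<and> y < x}"
    by (auto simp: le_less)
  then have "Pl (beta_set l a) (beta_set l a) = Ps (beta_set l a) (beta_set l a)" by (simp add: Pl_def Ps_def)
  then show ?thesis using pair[OF p p, of a a] by simp
qed



definition phi :: "nat \<Rightarrow> nat \<Rightarrow> int \<Rightarrow> int" where
  "phi r k c = (c + 1) * int r - int k"

lemma mul_ge: "1 \<le> d \<Longrightarrow> int r \<le> d * int r"
  using mult_right_mono[of 1 d "int r"] by simp
lemma mul_le: "d \<le> -1 \<Longrightarrow> d * int r \<le> - int r"
  using mult_right_mono[of d "-1" "int r"] by simp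

lemma int_div_lt: "0 < (q::int) \<Longrightarrow> y < L * q \<Longrightarrow> y div q < L"
proof (rule ccontr)
  assume a: "0 < q" "y < L * q" "\<not> y div q < L"
  then have "L * q \<le> (y div q) * q" by (simp add: mult_right_mono)
  moreover have "(y div q) * q \<le> y" using a(1) by (metis div_mult_mod_eq le_add_same_cancel1 pos_mod_sign)
  ultimately show False using a(2) by simp
qed

lemma phi_less:
  assumes "j \<in> {1..r}" "k \<in> {1..r}"
  shows "phi r k c' < phi r j c \<longleftrightarrow> (c' < c \<or> (c' = c \<and> j < k))"
proof -
  have eq: "phi r k c' < phi r j c \<longleftrightarrow> (c' - c) * int r < int k - int j"
    by (simp add: phi_def algebra_simps)
  have kj: "int k \<le> int r" "1 \<le> int k" "int j \<le> int r" "1 \<le> int j" using assms by auto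
  consider "c' < c" | "c' = c" | "c' > c" by linarith
  then show ?thesis
  proof cases
    case 1 then have "(c' - c) * int r \<le> - int r" by (intro mul_le) simp
    then have "phi r k c' < phi r j c" using eq kj by linarith
    then show ?thesis using 1 by auto
  next
    case 2 then show ?thesis using eq by auto
  next
    case 3 then have "int r \<le> (c' - c) * int r" by (intro mul_ge) simp
    then have "\<not> phi r k c' < phi r j c" using eq kj by linarith
    then show ?thesis using 3 by auto
  qed
qed

lemma phi_inj:
  assumes "j \<in> {1..r}" "k \<in> {1..r}" "phi r j c = phi r k c'"
  shows "j = k \<and> c = c'"
proof -
  have "\<not> (c' < c \<or> (c' = c \<and> j < k))" using phi_less[OF assms(1,2), of c' c] assms(3) by simp
  moreover have "\<not> (c < c' \<or> (c = c' \<and> k < j))" using phi_less[OF assms(2,1), of c c'] assms(3) by simp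
  ultimately show ?thesis by auto
qed

lemma phi_surj:
  assumes "1 \<le> r"
  shows "\<exists>k\<in>{1..r}. y = phi r k (y div int r)"
proof -
  have m: "0 \<le> y mod int r" "y mod int r < int r" using assms by auto
  define k where "k = r - nat (y mod int r)"
  have k: "int k = int r - y mod int r" using m unfolding k_def by simp
  have "y = phi r k (y div int r)" unfolding phi_def k
    by (simp add: algebra_simps)
  moreover have "k \<in> {1..r}" using m unfolding k_def by auto
  ultimately show ?thesis by blast
qed

lemma phi_nonneg:
  assumes "k \<in> {1..r}"
  shows "-1 < phi r k c \<longleftrightarrow> -1 < c"
proof (cases "-1 < c")
  case True
  then have "int r \<le> (c + 1) * int r" by (intro mul_ge) simp
  moreover have "int k \<le> int r" using assms by auto
  ultimately show ?thesis using True by (auto simp: phi_def)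
next
  case False
  then have "(c + 1) * int r \<le> 0" by (simp add: mult_nonpos_nonneg)
  then show ?thesis using False assms by (simp add: phi_def)
qed

definition Dset :: "nat \<Rightarrow> (nat \<Rightarrow> int set) \<Rightarrow> int set" where
  "Dset r C = (\<Union>k\<in>{1..r}. phi r k ` C k)"

lemma memD: assumes k: "k \<in> {1..r}" shows "phi r k c \<in> Dset r C \<longleftrightarrow> c \<in> C k"
proof
  assume "phi r k c \<in> Dset r C"
  then obtain j d where jd: "j \<in> {1..r}" "d \<in> C j" "phi r k c = phi r j d" unfolding Dset_def by auto
  then have "k = j \<and> c = d" using phi_inj[OF k jd(1)] by blast
  then show "c \<in> C k" using jd by simp
next
  assume "c \<in> C k" then show "phi r k c \<in> Dset r C" using k unfolding Dset_def by blast
qed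

lemma win_mono: "win B L H \<Longrightarrow> L' \<le> L \<Longrightarrow> H \<le> H' \<Longrightarrow> win B L' H'"
  unfolding win_def by auto

lemma unif:
  assumes "finite K" "\<forall>k\<in>K. \<exists>L H. win (f k) L H"
  shows "\<exists>L H. \<forall>k\<in>K. win (f k) L H"
  using assms
proof (induction K rule: finite_induct)
  case empty then show ?case by simp
next
  case (insert a K)
  then obtain L H where LH: "\<forall>k\<in>K. win (f k) L H" by auto
  obtain L' H' where "win (f a) L' H'" using insert.prems by auto
  then show ?case using LH
    by (intro exI[of _ "min L L'"] exI[of _ "max H H'"]) (auto elim!: win_mono)
qed

lemma win_D:
  assumes r: "1 \<le> r" and w: "\<forall>k\<in>{1..r}. win (C k) L H"
  shows "win (Dset r C) (L * int r) (H * int r)"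
  unfolding win_def
proof safe
  fix y assume y: "y < L * int r"
  obtain k where k: "k \<in> {1..r}" "y = phi r k (y div int r)" using phi_surj[OF r] by blast
  have "y div int r < L" using int_div_lt[of "int r" y L] y r by simp
  then have "y div int r \<in> C k" using w k(1) unfolding win_def by auto
  then show "y \<in> Dset r C" using k memD by metis
next
  fix y assume y: "y \<in> Dset r C"
  then obtain k c where kc: "k \<in> {1..r}" "c \<in> C k" "y = phi r k c" unfolding Dset_def by auto
  have "C k \<subseteq> {..<H}" using w kc(1) unfolding win_def by blast
  then have "c + 1 \<le> H" using kc(2) by auto
  then have m: "(c + 1) * int r \<le> H * int r" by (simp add: mult_right_mono)
  have "1 \<le> int k" using kc(1) by auto
  then show "y < H * int r" using m kc(3) unfolding phi_def by linarith
qed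



lemma dm: "0 < (e::int) \<Longrightarrow> 0 \<le> i \<Longrightarrow> i < e \<Longrightarrow> (c*e + i) div e = c \<and> (c*e + i) mod e = i"
  by simp

lemma runner_eq:
  assumes "0 < e" "0 \<le> i" "i < e"
  shows "runner e B i = {c. c*e + i \<in> B}"
proof safe
  fix x assume "x \<in> runner e B i"
  then obtain b where b: "b \<in> B" "b mod e = i" "x = (b - i) div e" unfolding runner_def by auto
  have "b = (b div e) * e + i" using b(2) by (metis div_mult_mod_eq)
  then have "x = b div e" using b(3) assms(1) by (metis add_diff_cancel_right' nonzero_mult_div_cancel_right less_irrefl)
  then show "x * e + i \<in> B" using b \<open>b = (b div e) * e + i\<close> by simp
next
  fix c assume "c * e + i \<in> B"
  moreover have "(c*e + i) mod e = i" "(c*e + i - i) div e = c" using assms by simp_all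
  ultimately show "c \<in> runner e B i" unfolding runner_def by force
qed

lemma runner_win:
  assumes e: "0 < e" "0 \<le> i" "i < e" and w: "win B L U"
  shows "win (runner e B i) (- \<bar>L\<bar>) \<bar>U\<bar>"
  unfolding runner_eq[OF e] win_def
proof safe
  fix c assume c: "c < - \<bar>L\<bar>"
  have "e * (c + 1) \<le> 1 * (c + 1)" using mult_right_mono_neg[of 1 e "c+1"] c e(1) by simp
  then have "(c + 1) * e \<le> c + 1" by (simp add: mult.commute)
  then have "c * e + i < L" using c e by (simp add: algebra_simps)
  then show "c * e + i \<in> B" using w unfolding win_def by auto
next
  fix c assume c: "c * e + i \<in> B"
  then have lt: "c * e + i < U" using w unfolding win_def by auto
  show "c < \<bar>U\<bar>"
  proof (rule ccontr)
    assume "\<not> c < \<bar>U\<bar>"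
    then have "c \<ge> 0" "c \<ge> U" by auto
    then have "c * 1 \<le> c * e" using e(1) by (intro mult_left_mono) auto
    then show False using lt \<open>c \<ge> U\<close> e(2) by simp
  qed
qed

lemma psi_eq: "uglov_psi e r k b = phi r k (b div e) * e + b mod e"
  unfolding uglov_psi_def phi_def by simp

definition Uset :: "int \<Rightarrow> nat \<Rightarrow> (nat \<Rightarrow> int set) \<Rightarrow> int set" where
  "Uset e r B = (\<Union>k\<in>{1..r}. uglov_psi e r k ` B k)"

lemma runner_union:
  assumes e: "0 < e" "0 \<le> i" "i < e"
  shows "runner e (Uset e r B) i = Dset r (\<lambda>k. runner e (B k) i)"
proof -
  have "c' * e + i \<in> Uset e r B \<longleftrightarrow> (\<exists>k\<in>{1..r}. \<exists>c. c * e + i \<in> B k \<and> c' = phi r k c)" for c'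
  proof
    assume "c' * e + i \<in> Uset e r B"
    then obtain k b where kb: "k \<in> {1..r}" "b \<in> B k" "c' * e + i = uglov_psi e r k b" unfolding Uset_def by auto
    then have "c' * e + i = phi r k (b div e) * e + b mod e" by (simp add: psi_eq)
    moreover have "0 \<le> b mod e" "b mod e < e" using e by auto
    ultimately have "c' = phi r k (b div e) \<and> i = b mod e" using dm[OF e(1)] e
      by (metis)
    moreover have "(b div e) * e + b mod e = b" by simp
    ultimately show "\<exists>k\<in>{1..r}. \<exists>c. c * e + i \<in> B k \<and> c' = phi r k c" using kb by metis
  next
    assume "\<exists>k\<in>{1..r}. \<exists>c. c * e + i \<in> B k \<and> c' = phi r k c"
    then obtain k c where kc: "k \<in> {1..r}" "c * e + i \<in> B k" "c' = phi r k c" by auto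
    have "uglov_psi e r k (c * e + i) = phi r k c * e + i" using e by (simp add: psi_eq)
    then show "c' * e + i \<in> Uset e r B" using kc unfolding Uset_def by force
  qed
  then show ?thesis unfolding runner_eq[OF e] Dset_def by auto
qed

lemma win_from_runners:
  assumes e: "0 < e" and w: "\<forall>i\<in>{0..<e}. win (runner e U i) L H"
  shows "win U (L * e) (H * e)"
  unfolding win_def
proof safe
  fix y assume y: "y < L * e"
  define c where "c = y div e"
  define i where "i = y mod e"
  have i: "0 \<le> i" "i < e" using e unfolding i_def by auto
  have "c < L" unfolding c_def using int_div_lt[OF e y] .
  moreover have "win (runner e U i) L H" using w i by simp
  ultimately have "c \<in> runner e U i" unfolding win_def by auto
  then have "c * e + i \<in> U" using runner_eq[OF e i] by auto
  moreover have "c * e + i = y" unfolding c_def i_def by simp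
  ultimately show "y \<in> U" by simp
next
  fix y assume y: "y \<in> U"
  define c where "c = y div e"
  define i where "i = y mod e"
  have i: "0 \<le> i" "i < e" using e unfolding i_def by auto
  have cy: "c * e + i = y" unfolding c_def i_def by simp
  then have "c \<in> runner e U i" using runner_eq[OF e i] y by auto
  moreover have "win (runner e U i) L H" using w i by simp
  ultimately have "c + 1 \<le> H" unfolding win_def by auto
  then have "(c + 1) * e \<le> H * e" using e by (simp add: mult_right_mono)
  then show "y < H * e" using cy i by (simp add: algebra_simps)
qed



lemma phi_inj_on: "k \<in> {1..r} \<Longrightarrow> inj_on (phi r k) S"
  using phi_inj by (meson inj_onI)

lemma card_phi_union:
  assumes "\<forall>k\<in>{1..r}. finite (A k)"
  shows "card (\<Union>k\<in>{1..r}. phi r k ` A k) = (\<Sum>k\<in>{1..r}. card (A k))"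
proof -
  have "card (\<Union>k\<in>{1..r}. phi r k ` A k) = (\<Sum>k\<in>{1..r}. card (phi r k ` A k))"
  proof (rule card_UN_disjoint)
    show "\<forall>i\<in>{1..r}. \<forall>j\<in>{1..r}. i \<noteq> j \<longrightarrow> phi r i ` A i \<inter> phi r j ` A j = {}"
      using phi_inj by blast
  qed (use assms in auto)
  also have "\<dots> = (\<Sum>k\<in>{1..r}. card (A k))"
    by (rule sum.cong) (auto intro!: card_image phi_inj_on)
  finally show ?thesis .
qed

lemma charge_D:
  assumes r: "1 \<le> r" and p: "\<forall>k\<in>{1..r}. is_partition (\<rho> k)"
    and C: "\<forall>k\<in>{1..r}. C k = beta_set (\<rho> k) (t k)"
    and pD: "is_partition \<rho>'" and D: "Dset r C = beta_set \<rho>' t'"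
  shows "t' = (\<Sum>k\<in>{1..r}. t k)"
proof -
  have e1: "{y\<in>Dset r C. -1 < y} = (\<Union>k\<in>{1..r}. phi r k ` {c\<in>C k. -1 < c})"
  proof safe
    fix y assume "y \<in> Dset r C" "-1 < y"
    then obtain k c where "k \<in> {1..r}" "c \<in> C k" "y = phi r k c" unfolding Dset_def by auto
    then show "y \<in> (\<Union>k\<in>{1..r}. phi r k ` {c\<in>C k. -1 < c})" using phi_nonneg \<open>-1 < y\<close> by blast
  next
    fix k c assume "k \<in> {1..r}" "c \<in> C k" "-1 < c"
    then show "phi r k c \<in> Dset r C" "-1 < phi r k c" using memD phi_nonneg by blast+
  qed
  have e2: "{y. y \<notin> Dset r C \<and> y \<le> -1} = (\<Union>k\<in>{1..r}. phi r k ` {c. c \<notin> C k \<and> c \<le> -1})"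
  proof safe
    fix y assume y: "y \<notin> Dset r C" "y \<le> -1"
    obtain k where k: "k \<in> {1..r}" "y = phi r k (y div int r)" using phi_surj[OF r] by blast
    have "y div int r \<notin> C k" using memD[OF k(1)] k(2) y(1) by metis
    moreover have "y div int r \<le> -1" using phi_nonneg[OF k(1), of "y div int r"] k(2) y(2) by linarith
    ultimately show "y \<in> (\<Union>k\<in>{1..r}. phi r k ` {c. c \<notin> C k \<and> c \<le> -1})" using k by blast
  next
    fix k c assume "k \<in> {1..r}" "c \<notin> C k" "c \<le> -1"
    then show "phi r k c \<in> Dset r C \<Longrightarrow> False" "phi r k c \<le> -1" using memD phi_nonneg[of k r c] by auto
  qed
  have f1: "\<forall>k\<in>{1..r}. finite {c\<in>C k. -1 < c}" using C win_fin1[OF beta_win] p by metis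
  have f2: "\<forall>k\<in>{1..r}. finite {c. c \<notin> C k \<and> c \<le> -1}" using C win_fin2[OF beta_win] p by metis
  have "t' = int (card {y\<in>Dset r C. -1 < y}) - int (card {y. y \<notin> Dset r C \<and> y \<le> -1})"
    using CH[OF pD, of t' "-1"] unfolding D by simp
  also have "\<dots> = (\<Sum>k\<in>{1..r}. int (card {c\<in>C k. -1 < c})) - (\<Sum>k\<in>{1..r}. int (card {c. c \<notin> C k \<and> c \<le> -1}))"
    unfolding e1 e2 card_phi_union[OF f1] card_phi_union[OF f2] by simp
  also have "\<dots> = (\<Sum>k\<in>{1..r}. int (card {c\<in>C k. -1 < c}) - int (card {c. c \<notin> C k \<and> c \<le> -1}))"
    by (simp add: sum_subtractf)
  also have "\<dots> = (\<Sum>k\<in>{1..r}. t k)"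
  proof (rule sum.cong)
    fix k assume k: "k \<in> {1..r}"
    have Ck: "C k = beta_set (\<rho> k) (t k)" using C k by blast
    have "t k = int (card {c\<in>C k. -1 < c}) - int (card {c. c \<notin> C k \<and> c \<le> -1})"
      using CH[of "\<rho> k" "t k" "-1"] p k unfolding Ck by simp
    then show "int (card {c\<in>C k. -1 < c}) - int (card {c. c \<notin> C k \<and> c \<le> -1}) = t k" by simp
  qed simp
  finally show ?thesis .
qed



definition Sm :: "nat \<Rightarrow> nat \<Rightarrow> nat \<Rightarrow> (int \<times> int) set \<Rightarrow> (int \<times> int) set" where
  "Sm r a b A = (\<lambda>(c,c'). (phi r a c, phi r b c')) ` A"

definition Gs :: "nat \<Rightarrow> (nat \<Rightarrow> int set) \<Rightarrow> nat \<Rightarrow> nat \<Rightarrow> (int \<times> int) set" where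
  "Gs r C a b = {(c,c'). c \<in> C a \<and> c' \<notin> C b \<and> phi r b c' < phi r a c}"

lemma card_Sm: "a \<in> {1..r} \<Longrightarrow> b \<in> {1..r} \<Longrightarrow> card (Sm r a b A) = card A"
  unfolding Sm_def
proof (rule card_image, rule inj_onI, clarify)
  fix c c' d d' assume "a \<in> {1..r}" "b \<in> {1..r}" "phi r a c = phi r a d" "phi r b c' = phi r b d'"
  then show "c = d \<and> c' = d'" using phi_inj by blast
qed

lemma Sm_sub: "a \<in> {1..r} \<Longrightarrow> b \<in> {1..r} \<Longrightarrow>
   Sm r a b (Gs r C a b) \<subseteq> {(x,y). x \<in> Dset r C \<and> y \<notin> Dset r C \<and> y < x}"
proof
  fix p assume a: "a \<in> {1..r}" "b \<in> {1..r}" and p: "p \<in> Sm r a b (Gs r C a b)"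
  then obtain c c' where cc: "p = (phi r a c, phi r b c')" "c \<in> C a" "c' \<notin> C b" "phi r b c' < phi r a c"
    unfolding Sm_def Gs_def by auto
  have "phi r a c \<in> Dset r C" using memD[OF a(1)] cc(2) by blast
  moreover have "phi r b c' \<notin> Dset r C" using memD[OF a(2)] cc(3) by blast
  ultimately show "p \<in> {(x,y). x \<in> Dset r C \<and> y \<notin> Dset r C \<and> y < x}" using cc by simp
qed

lemma Sm_disj: "a \<in> {1..r} \<Longrightarrow> b \<in> {1..r} \<Longrightarrow> a' \<in> {1..r} \<Longrightarrow> b' \<in> {1..r} \<Longrightarrow>
   p \<in> Sm r a b A \<Longrightarrow> p \<in> Sm r a' b' A' \<Longrightarrow> a = a' \<and> b = b'"
proof -
  assume a: "a \<in> {1..r}" "b \<in> {1..r}" "a' \<in> {1..r}" "b' \<in> {1..r}" "p \<in> Sm r a b A" "p \<in> Sm r a' b' A'"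
  obtain c c' where 1: "p = (phi r a c, phi r b c')" using a(5) unfolding Sm_def by auto
  obtain d d' where 2: "p = (phi r a' d, phi r b' d')" using a(6) unfolding Sm_def by auto
  have "phi r a c = phi r a' d" "phi r b c' = phi r b' d'" using 1 2 by auto
  then show ?thesis using phi_inj a(1-4) by blast
qed

lemma Gs_lt: "a \<in> {1..r} \<Longrightarrow> b \<in> {1..r} \<Longrightarrow> a < b \<Longrightarrow>
   Gs r C a b = {(c,c'). c \<in> C a \<and> c' \<notin> C b \<and> c' \<le> c}"
  unfolding Gs_def using phi_less by (auto simp: le_less)

lemma Gs_ge: "a \<in> {1..r} \<Longrightarrow> b \<in> {1..r} \<Longrightarrow> \<not> a < b \<Longrightarrow>
   Gs r C a b = {(c,c'). c \<in> C a \<and> c' \<notin> C b \<and> c' < c}"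
  unfolding Gs_def using phi_less by auto

lemma inv_D:
  assumes r: "1 \<le> r" and p: "\<forall>k\<in>{1..r}. is_partition (\<rho> k)"
    and C: "\<forall>k\<in>{1..r}. C k = beta_set (\<rho> k) (t k)"
    and pD: "is_partition \<rho>'" and D: "Dset r C = beta_set \<rho>' t'"
    and k0: "k0 \<in> {1..r}"
  shows "2 * int r * int (size_part (\<rho> k0)) +
     (\<Sum>j\<in>{1..r} - {k0}. if j < k0 then (t j - t k0) * (t j - t k0 + 1) else (t k0 - t j) * (t k0 - t j + 1))
     \<le> 2 * int (size_part \<rho>')"
proof -
  define K where "K = {1..r}"
  define J where "J = K - {k0}"
  define Inv where "Inv = {(x,y). x \<in> Dset r C \<and> y \<notin> Dset r C \<and> y < x}"
  define W where "W j = Sm r j k0 (Gs r C j k0) \<union> Sm r k0 j (Gs r C k0 j)" for j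
  define S0 where "S0 = Sm r k0 k0 (Gs r C k0 k0)"
  define Q where "Q j = (if j < k0 then (t j - t k0) * (t j - t k0 + 1) else (t k0 - t j) * (t k0 - t j + 1))" for j
  define s0 where "s0 = int (size_part (\<rho> k0))"
  have k0K: "k0 \<in> K" using k0 unfolding K_def .
  have JK: "J \<subseteq> K" unfolding J_def by auto
  have finInv: "finite Inv" unfolding Inv_def D using fin_ps[OF beta_win[OF pD] beta_win[OF pD]] .
  have cardInv: "int (card Inv) = int (size_part \<rho>')"
    using inv_size[OF pD, of t'] unfolding Inv_def D Ps_def .
  have subW: "W j \<subseteq> Inv" if "j \<in> K" for j
    using Sm_sub[of j r k0 C] Sm_sub[of k0 r j C] that k0K unfolding W_def Inv_def K_def by blast
  have subS0: "S0 \<subseteq> Inv" using Sm_sub[of k0 r k0 C] k0K unfolding S0_def Inv_def K_def by blast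
  have sub: "S0 \<union> (\<Union>j\<in>J. W j) \<subseteq> Inv" using subW subS0 JK by blast
  have finW: "finite (W j)" if "j \<in> K" for j using finite_subset[OF subW[OF that] finInv] .
  have finS0: "finite S0" using finite_subset[OF subS0 finInv] .
  have finJ: "finite J" unfolding J_def K_def by simp
  have disj0: "S0 \<inter> (\<Union>j\<in>J. W j) = {}"
  proof (rule ccontr)
    assume "S0 \<inter> (\<Union>j\<in>J. W j) \<noteq> {}"
    then obtain q j where q: "q \<in> S0" "j \<in> J" "q \<in> W j" by blast
    have jK: "j \<in> K" "j \<noteq> k0" using q(2) unfolding J_def by auto
    from q(3) show False unfolding W_def
    proof
      assume "q \<in> Sm r j k0 (Gs r C j k0)"
      then show False using Sm_disj[of k0 r k0 j k0 q] q(1) jK k0K unfolding S0_def K_def by blast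
    next
      assume "q \<in> Sm r k0 j (Gs r C k0 j)"
      then show False using Sm_disj[of k0 r k0 k0 j q] q(1) jK k0K unfolding S0_def K_def by blast
    qed
  qed
  have cardWj: "card (W j) = card (Gs r C j k0) + card (Gs r C k0 j)" if "j \<in> J" for j
  proof -
    have jK: "j \<in> K" "j \<noteq> k0" using that unfolding J_def by auto
    have d: "Sm r j k0 (Gs r C j k0) \<inter> Sm r k0 j (Gs r C k0 j) = {}"
      using Sm_disj[of j r k0 k0 j] jK k0K unfolding K_def by blast
    have f1: "finite (Sm r j k0 (Gs r C j k0))" "finite (Sm r k0 j (Gs r C k0 j))"
      using finW[OF jK(1)] unfolding W_def by auto
    have "card (W j) = card (Sm r j k0 (Gs r C j k0)) + card (Sm r k0 j (Gs r C k0 j))"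
      unfolding W_def by (rule card_Un_disjoint[OF f1 d])
    then show ?thesis using card_Sm jK k0K unfolding K_def by simp
  qed
  have cardU: "card (\<Union>j\<in>J. W j) = (\<Sum>j\<in>J. card (W j))"
  proof (rule card_UN_disjoint[OF finJ])
    show "\<forall>j\<in>J. finite (W j)" using finW JK by blast
    show "\<forall>i\<in>J. \<forall>j\<in>J. i \<noteq> j \<longrightarrow> W i \<inter> W j = {}"
    proof (intro ballI impI)
      fix i j assume ij: "i \<in> J" "j \<in> J" "i \<noteq> j"
      have iK: "i \<in> {1..r}" "i \<noteq> k0" "j \<in> {1..r}" "j \<noteq> k0" using ij unfolding J_def K_def by auto
      have k0': "k0 \<in> {1..r}" using k0 .
      show "W i \<inter> W j = {}"
      proof (rule ccontr)
        assume "W i \<inter> W j \<noteq> {}"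
        then obtain q where "q \<in> W i" "q \<in> W j" by blast
        then show False unfolding W_def
          using Sm_disj[of i r k0 j k0 q] Sm_disj[of i r k0 k0 j q] Sm_disj[of k0 r i j k0 q] Sm_disj[of k0 r i k0 j q]
            iK ij(3) k0' by blast
      qed
    qed
  qed
  have cardS0: "int (card S0) = s0"
  proof -
    have "card S0 = card (Gs r C k0 k0)" unfolding S0_def using card_Sm k0 by blast
    also have "Gs r C k0 k0 = {(c,c'). c \<in> C k0 \<and> c' \<notin> C k0 \<and> c' < c}" using Gs_ge[OF k0 k0] by simp
    finally have "card S0 = Ps (C k0) (C k0)" unfolding Ps_def .
    moreover have "C k0 = beta_set (\<rho> k0) (t k0)" using C k0 by blast
    ultimately show ?thesis using inv_size[of "\<rho> k0" "t k0"] p k0 unfolding s0_def by simp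
  qed
  have pairJ: "2 * s0 + Q j \<le> 2 * int (card (Gs r C j k0) + card (Gs r C k0 j))" if "j \<in> J" for j
  proof -
    have jK: "j \<in> {1..r}" "j \<noteq> k0" using that unfolding J_def K_def by auto
    have Cj: "C j = beta_set (\<rho> j) (t j)" and Ck: "C k0 = beta_set (\<rho> k0) (t k0)" using C jK k0 by blast+
    have pj: "is_partition (\<rho> j)" and pk: "is_partition (\<rho> k0)" using p jK k0 by blast+
    show ?thesis
    proof (cases "j < k0")
      case True
      have "card (Gs r C j k0) = Pl (C j) (C k0)" using Gs_lt[OF jK(1) k0 True] unfolding Pl_def by simp
      moreover have "card (Gs r C k0 j) = Ps (C k0) (C j)" using Gs_ge[OF k0 jK(1)] True unfolding Ps_def by simp
      ultimately show ?thesis using pair[OF pj pk, of "t j" "t k0"] True unfolding Cj Ck Q_def s0_def by simp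
    next
      case False
      then have lt: "k0 < j" using jK(2) by simp
      have "card (Gs r C k0 j) = Pl (C k0) (C j)" using Gs_lt[OF k0 jK(1) lt] unfolding Pl_def by simp
      moreover have "card (Gs r C j k0) = Ps (C j) (C k0)" using Gs_ge[OF jK(1) k0] lt unfolding Ps_def by simp
      ultimately show ?thesis using pair[OF pk pj, of "t k0" "t j"] False unfolding Cj Ck Q_def s0_def by simp
    qed
  qed
  have "card S0 + card (\<Union>j\<in>J. W j) \<le> card Inv"
  proof -
    have "card (S0 \<union> (\<Union>j\<in>J. W j)) = card S0 + card (\<Union>j\<in>J. W j)"
      by (rule card_Un_disjoint[OF finS0 _ disj0]) (use finW JK finJ in auto)
    moreover have "card (S0 \<union> (\<Union>j\<in>J. W j)) \<le> card Inv" by (rule card_mono[OF finInv sub])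
    ultimately show ?thesis by simp
  qed
  moreover have "(\<Sum>j\<in>J. card (W j)) = (\<Sum>j\<in>J. card (Gs r C j k0) + card (Gs r C k0 j))"
    by (rule sum.cong) (simp_all add: cardWj)
  ultimately have n: "card S0 + (\<Sum>j\<in>J. card (Gs r C j k0) + card (Gs r C k0 j)) \<le> size_part \<rho>'"
    using cardInv cardU by simp
  then have "int (card S0) + int (\<Sum>j\<in>J. card (Gs r C j k0) + card (Gs r C k0 j)) \<le> int (size_part \<rho>')"
    by (simp only: of_nat_add[symmetric] of_nat_le_iff)
  then have "s0 + (\<Sum>j\<in>J. int (card (Gs r C j k0) + card (Gs r C k0 j))) \<le> int (size_part \<rho>')"
    using cardS0 by (simp only: of_nat_sum)
  then have main: "2 * s0 + (\<Sum>j\<in>J. 2 * int (card (Gs r C j k0) + card (Gs r C k0 j))) \<le> 2 * int (size_part \<rho>')"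
  proof -
    have "(\<Sum>j\<in>J. 2 * int (card (Gs r C j k0) + card (Gs r C k0 j))) = 2 * (\<Sum>j\<in>J. int (card (Gs r C j k0) + card (Gs r C k0 j)))"
      by (rule sum_distrib_left[symmetric])
    then show ?thesis using \<open>s0 + _ \<le> _\<close> by linarith
  qed
  have "(\<Sum>j\<in>J. 2 * s0 + Q j) \<le> (\<Sum>j\<in>J. 2 * int (card (Gs r C j k0) + card (Gs r C k0 j)))"
    by (rule sum_mono) (rule pairJ)
  moreover have "(\<Sum>j\<in>J. 2 * s0 + Q j) = 2 * s0 * int (card J) + (\<Sum>j\<in>J. Q j)"
    by (simp add: sum.distrib)
  moreover have "card J = r - 1" unfolding J_def K_def using k0 by simp
  ultimately have "2 * s0 + 2 * s0 * int (r - 1) + (\<Sum>j\<in>J. Q j) \<le> 2 * int (size_part \<rho>')"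
    using main by simp
  moreover have "2 * s0 + 2 * s0 * int (r - 1) = 2 * int r * s0" using r by (simp add: of_nat_diff algebra_simps)
  ultimately show ?thesis unfolding s0_def[symmetric] Q_def[symmetric] J_def K_def by simp
qed



lemma cfg: "win X L H \<Longrightarrow> is_partition (fst (config_of X)) \<and> X = beta_set (fst (config_of X)) (snd (config_of X))"
  using config_win by fastforce

lemma q1: "0 \<le> (z::int) * (z + 1)"
proof (cases "z \<ge> 0")
  case True then show ?thesis by simp
next
  case False then show ?thesis by (simp add: mult_nonpos_nonpos)
qed

lemma q2: "2 * w \<le> (w::int) * (w + 1)"
proof -
  have "0 \<le> w * (w - 1)"
  proof (cases "w \<ge> 1")
    case True then show ?thesis by simp
  next
    case False then show ?thesis by (simp add: mult_nonpos_nonpos)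
  qed
  then show ?thesis by (simp add: algebra_simps)
qed

lemma q3: "-2 * z - 2 \<le> (z::int) * (z + 1)"
proof -
  have "0 \<le> (z + 1) * (z + 2)"
  proof (cases "z \<ge> -1")
    case True then show ?thesis by simp
  next
    case False then show ?thesis by (simp add: mult_nonpos_nonpos)
  qed
  then show ?thesis by (simp add: algebra_simps)
qed

lemma pairQ:
  fixes a b c d :: int
  shows "2 * ((c - d) - (a - b)) - 2 \<le>
    (if j < k0 then (a - b) * (a - b + 1) else (b - a) * (b - a + 1)) +
    (if j < k0 then (c - d) * (c - d + 1) else (d - c) * (d - c + 1))"
proof (cases "j < k0")
  case True
  then show ?thesis using q3[of "a - b"] q2[of "c - d"] by simp
next
  case False
  then show ?thesis using q2[of "b - a"] q3[of "d - c"] by simp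
qed

theorem lemma3p3:
  fixes e :: int and r :: nat
    and lam :: "nat \<Rightarrow> nat list" and s :: "nat \<Rightarrow> int"
  assumes "e \<ge> 2" and "r \<ge> 1"
    and "\<forall>k\<in>{1..r}. is_partition (lam k)"
    and "\<not> rouquier_multi e r lam s"
  shows "\<not> r_rouquier e (int r) (fst (Uglov_Psi e r lam s)) (snd (Uglov_Psi e r lam s))"
proof -
  define K where "K = {1..r}"
  define B where "B k = beta_set (lam k) (s k)" for k
  have e0: "0 < e" using assms(1) by simp
  have r1: "1 \<le> r" using assms(2) .
  define Uu where "Uu = Uset e r B"
  have U: "Uglov_Psi e r lam s = config_of Uu" unfolding Uglov_Psi_def Uu_def Uset_def B_def ..
  define R where "R k n = runner e (B k) (int n)" for k n
  define \<rho> where "\<rho> k n = fst (config_of (R k n))" for k n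
  define t where "t k n = snd (config_of (R k n))" for k n
  have winB: "\<exists>L H. win (B k) L H" if "k \<in> K" for k
    using assms(3) beta_win that unfolding B_def K_def by blast
  have winR: "\<exists>L H. win (R k n) L H" if kK: "k \<in> K" and nN: "n < nat e" for k n
  proof -
    obtain L H where w: "win (B k) L H" using winB[OF kK] by blast
    have "0 \<le> int n" "int n < e" using nN by auto
    then show ?thesis using runner_win[OF e0 _ _ w] unfolding R_def by blast
  qed
  have Rst: "is_partition (\<rho> k n) \<and> R k n = beta_set (\<rho> k n) (t k n)" if "k \<in> K" "n < nat e" for k n
    using winR[OF that] cfg unfolding \<rho>_def t_def by blast
  define Dn where "Dn n = Dset r (\<lambda>k. R k n)" for n
  have Dwin: "\<exists>L H. win (Dn n) L H" if "n < nat e" for n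
  proof -
    have "\<exists>L H. \<forall>k\<in>K. win (R k n) L H" by (rule unif) (use winR that K_def in auto)
    then obtain L H where "\<forall>k\<in>{1..r}. win (R k n) L H" unfolding K_def by blast
    then have "win (Dset r (\<lambda>k. R k n)) (L * int r) (H * int r)" by (rule win_D[OF r1])
    then show ?thesis unfolding Dn_def by blast
  qed
  have RU: "runner e Uu (int n) = Dn n" if "n < nat e" for n
    unfolding Uu_def Dn_def R_def using runner_union[OF e0, of "int n" r B] that by simp
  have Uwin: "\<exists>L H. win Uu L H"
  proof -
    have "\<exists>L H. \<forall>i\<in>{0..<e}. win (runner e Uu i) L H"
    proof (rule unif)
      show "\<forall>i\<in>{0..<e}. \<exists>L H. win (runner e Uu i) L H"
      proof
        fix i assume i: "i \<in> {0..<e}"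
        then have n: "nat i < nat e" "int (nat i) = i" by auto
        show "\<exists>L H. win (runner e Uu i) L H" using RU[OF n(1)] Dwin[OF n(1)] n(2) by metis
      qed
    qed simp
    then show ?thesis using win_from_runners[OF e0] by blast
  qed
  define lt where "lt = fst (config_of Uu)"
  define st where "st = snd (config_of Uu)"
  have Ust: "is_partition lt \<and> Uu = beta_set lt st" using Uwin cfg unfolding lt_def st_def by blast
  have Psi: "fst (Uglov_Psi e r lam s) = lt" "snd (Uglov_Psi e r lam s) = st" unfolding U lt_def st_def by simp_all
  define \<rho>t where "\<rho>t n = fst (config_of (Dn n))" for n
  define tt where "tt n = snd (config_of (Dn n))" for n
  have Dst: "is_partition (\<rho>t n) \<and> Dn n = beta_set (\<rho>t n) (tt n)" if "n < nat e" for n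
    using Dwin[OF that] cfg unfolding \<rho>t_def tt_def by blast
  have eta_t: "eta e lt st n = (\<rho>t n, tt n)" if "n < nat e" for n
    unfolding eta_def using Ust RU[OF that] unfolding \<rho>t_def tt_def by simp
  have eta_k: "eta e (lam k) (s k) n = (\<rho> k n, t k n)" for k n
    unfolding eta_def \<rho>_def t_def R_def B_def by simp
  have charge: "tt n = (\<Sum>k\<in>K. t k n)" if "n < nat e" for n
    using charge_D[OF r1, of "\<lambda>k. \<rho> k n" "\<lambda>k. R k n" "\<lambda>k. t k n" "\<rho>t n" "tt n"] Rst[OF _ that] Dst[OF that]
    unfolding Dn_def K_def by blast
  obtain k0 where k0: "k0 \<in> K" "\<not> rouquier e (lam k0) (s k0)"
    using assms(4) unfolding rouquier_multi_def K_def by blast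
  obtain i0 where i0: "i0 + 1 < nat e"
    "\<not> int (weight e (lam k0) (s k0)) \<le> snd (eta e (lam k0) (s k0) (i0 + 1)) - snd (eta e (lam k0) (s k0) i0) + 1"
    using k0(2) unfolding rouquier_def r_rouquier_def by blast
  define N where "N = nat e"
  define d where "d j = t j (i0 + 1) - t j i0" for j
  define J where "J = K - {k0}"
  define Q where "Q j n = (if j < k0 then (t j n - t k0 n) * (t j n - t k0 n + 1) else (t k0 n - t j n) * (t k0 n - t j n + 1))" for j n
  define E where "E n = (\<Sum>j\<in>J. Q j n)" for n
  define W0 where "W0 = (\<Sum>n<N. int (size_part (\<rho> k0 n)))"
  define Wt where "Wt = (\<Sum>n<N. int (size_part (\<rho>t n)))"
  have hW0: "d k0 + 2 \<le> W0"
  proof -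
    have "int (weight e (lam k0) (s k0)) = W0" unfolding weight_def W0_def N_def eta_k by (simp add: of_nat_sum)
    then show ?thesis using i0(2) unfolding eta_k d_def by simp
  qed
  have hWt: "int (weight e lt st) = Wt"
    unfolding weight_def Wt_def N_def of_nat_sum by (rule sum.cong) (simp_all add: eta_t)
  have invn: "2 * int r * int (size_part (\<rho> k0 n)) + E n \<le> 2 * int (size_part (\<rho>t n))" if "n < N" for n
    using inv_D[OF r1, of "\<lambda>k. \<rho> k n" "\<lambda>k. R k n" "\<lambda>k. t k n" "\<rho>t n" "tt n" k0] Rst[OF _ that[unfolded N_def]]
      Dst[OF that[unfolded N_def]] k0(1)
    unfolding Dn_def K_def E_def Q_def J_def by blast
  have Enn: "0 \<le> E n" for n unfolding E_def Q_def by (rule sum_nonneg) (simp add: q1)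
  have s1: "2 * int r * W0 + (\<Sum>n<N. E n) \<le> 2 * Wt"
  proof -
    have "(\<Sum>n<N. 2 * int r * int (size_part (\<rho> k0 n)) + E n) \<le> (\<Sum>n<N. 2 * int (size_part (\<rho>t n)))"
      by (rule sum_mono) (use invn in simp)
    then show ?thesis unfolding W0_def Wt_def by (simp add: sum.distrib sum_distrib_left)
  qed
  have s2: "E i0 + E (i0 + 1) \<le> (\<Sum>n<N. E n)"
  proof -
    have "(\<Sum>n\<in>{i0, i0+1}. E n) \<le> (\<Sum>n<N. E n)"
      by (rule sum_mono2) (use i0(1) Enn N_def in auto)
    then show ?thesis by simp
  qed
  have s3: "(\<Sum>j\<in>J. 2 * (d j - d k0) - 2) \<le> E i0 + E (i0 + 1)"
  proof -
    have "(\<Sum>j\<in>J. 2 * (d j - d k0) - 2) \<le> (\<Sum>j\<in>J. Q j i0 + Q j (i0 + 1))"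
    proof (rule sum_mono)
      fix j assume "j \<in> J"
      have "2 * ((t j (i0+1) - t k0 (i0+1)) - (t j i0 - t k0 i0)) - 2 \<le> Q j i0 + Q j (i0 + 1)"
        unfolding Q_def by (rule pairQ)
      then show "2 * (d j - d k0) - 2 \<le> Q j i0 + Q j (i0 + 1)" unfolding d_def by (simp add: algebra_simps)
    qed
    then show ?thesis unfolding E_def by (simp add: sum.distrib)
  qed
  have cardJ: "card J = r - 1" unfolding J_def K_def using k0(1) K_def by simp
  have s4: "(\<Sum>j\<in>J. 2 * (d j - d k0) - 2) = 2 * (\<Sum>j\<in>J. d j) - 2 * int (r - 1) * d k0 - 2 * int (r - 1)"
    by (simp add: sum_subtractf sum_distrib_left[symmetric] sum_distrib_right[symmetric] cardJ algebra_simps)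
  have s5: "(\<Sum>j\<in>K. d j) = d k0 + (\<Sum>j\<in>J. d j)"
    unfolding J_def using k0(1) K_def by (simp add: sum.remove)
  have s6: "tt (i0 + 1) - tt i0 = (\<Sum>j\<in>K. d j)"
    using charge[of "i0+1"] charge[of i0] i0(1) unfolding d_def by (simp add: sum_subtractf)
  have rW: "int r * (d k0 + 2) \<le> int r * W0" using hW0 by (simp add: mult_left_mono)
  have ri: "int (r - 1) = int r - 1" using r1 by simp
  have fin: "(\<Sum>j\<in>K. d j) + int r < Wt"
    using s1 s2 s3 s4 s5 rW unfolding ri by (simp add: algebra_simps)
  show ?thesis unfolding Psi r_rouquier_def
  proof
    assume "\<forall>i. i + 1 < nat e \<longrightarrow> int (weight e lt st) \<le> snd (eta e lt st (i + 1)) - snd (eta e lt st i) + int r"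
    then have "int (weight e lt st) \<le> snd (eta e lt st (i0 + 1)) - snd (eta e lt st i0) + int r" using i0(1) by blast
    then have "Wt \<le> tt (i0 + 1) - tt i0 + int r" using eta_t i0(1) hWt by simp
    then show False using fin s6 by simp
  qed
qed


end
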